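(* Any locally compact group $G$ that is approximable by finite quasigroups is unimodular (its left and right Haar measures coincide).
   Context: A finite quasigroup is a finite set $H$ with a binary operation $\odot$ such that for all $a,b\in H$ each of the equations $a\odot x=b$ and $x\odot a=b$ has a unique solution $x\in H$. Approximability: let $C\subseteq G$ be compact, $U$ a neighborhood of the unit, and $(H,\odot)$ a finite algebra. $(H,j)$, $j:H\to G$, is a $(C,U)$-approximation of $G$ if $C\subseteq j(H)U$ and for all $x,y\in H$ with $j(x),j(y),j(x)j(y)\in C$ one has $j(x\odot y)\in j(x)j(y)U$. $G$ is approximable by finite quasigroups if for every compact $C$ and every neighborhood $U$ of the unit there is a $(C,U)$-approximation $(H,j)$ with $H$ a finite quasigroup and $j$ injective. *)

theory Defs
  imports "HOL-Analysis.Analysis" "HOL-Probability.Probability"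
begin

text \<open>A topological group is a type of class topological_group_add
(a possibly non-commutative group written additively, with unit 0, continuous
addition and negation).\<close>

definition locally_compact_group :: "'a::{topological_group_add,t2_space} itself \<Rightarrow> bool" where
  "locally_compact_group _ \<longleftrightarrow> locally_compact_space (euclidean :: 'a topology)"

text \<open>Radon measure on the Borel sets (Folland's convention): finite on compact sets,
outer regular on Borel sets, inner regular on open sets.\<close>

definition radon_measure :: "'a::topological_space measure \<Rightarrow> bool" where
  "radon_measure M \<longleftrightarrow>
     sets M = sets borel \<and>
     (\<forall>K. compact K \<longrightarrow> emeasure M K < \<infinity>) \<and>
     (\<forall>A\<in>sets borel. emeasure M A = (INF U\<in>{U. open U \<and> A \<subseteq> U}. emeasure M U)) \<and>
     (\<forall>U. open U \<longrightarrow> emeasure M U = (SUP K\<in>{K. compact K \<and> K \<subseteq> U}. emeasure M K))"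

definition left_haar_measure :: "'a::topological_group_add measure \<Rightarrow> bool" where
  "left_haar_measure M \<longleftrightarrow>
     radon_measure M \<and> emeasure M UNIV \<noteq> 0 \<and>
     (\<forall>g. \<forall>A\<in>sets borel. emeasure M ((\<lambda>x. g + x) ` A) = emeasure M A)"

definition right_haar_measure :: "'a::topological_group_add measure \<Rightarrow> bool" where
  "right_haar_measure M \<longleftrightarrow>
     radon_measure M \<and> emeasure M UNIV \<noteq> 0 \<and>
     (\<forall>g. \<forall>A\<in>sets borel. emeasure M ((\<lambda>x. x + g) ` A) = emeasure M A)"

definition unimodular :: "'a::topological_group_add itself \<Rightarrow> bool" where
  "unimodular _ \<longleftrightarrow> (\<forall>M::'a measure. left_haar_measure M \<longleftrightarrow> right_haar_measure M)"

text \<open>Finite quasigroup on a finite carrier H (finite sets are encoded as subsets of nat).\<close>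

definition finite_quasigroup :: "nat set \<Rightarrow> (nat \<Rightarrow> nat \<Rightarrow> nat) \<Rightarrow> bool" where
  "finite_quasigroup H op \<longleftrightarrow> finite H \<and>
     (\<forall>a\<in>H. \<forall>b\<in>H. op a b \<in> H) \<and>
     (\<forall>a\<in>H. \<forall>b\<in>H. (\<exists>!x. x \<in> H \<and> op a x = b) \<and> (\<exists>!x. x \<in> H \<and> op x a = b))"

definition CU_approximation ::
  "'a::group_add set \<Rightarrow> 'a set \<Rightarrow> nat set \<Rightarrow> (nat \<Rightarrow> nat \<Rightarrow> nat) \<Rightarrow> (nat \<Rightarrow> 'a) \<Rightarrow> bool" where
  "CU_approximation C U H op j \<longleftrightarrow>
     C \<subseteq> {j h + u | h u. h \<in> H \<and> u \<in> U} \<and>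
     (\<forall>x\<in>H. \<forall>y\<in>H. j x \<in> C \<and> j y \<in> C \<and> j x + j y \<in> C \<longrightarrow>
        j (op x y) \<in> {j x + j y + u | u. u \<in> U})"

definition approximable_by_finite_quasigroups :: "'a::topological_group_add itself \<Rightarrow> bool" where
  "approximable_by_finite_quasigroups _ \<longleftrightarrow>
     (\<forall>(C::'a set) U. compact C \<and> (\<exists>V. open V \<and> 0 \<in> V \<and> V \<subseteq> U) \<longrightarrow>
        (\<exists>H op j. finite_quasigroup H op \<and> inj_on j H \<and> CU_approximation C U H op j))"

end

theory Submission
  imports Defs
begin

lemma hausdorff_eucl: "Hausdorff_space (euclidean :: 'a::t2_space topology)"
  unfolding Hausdorff_space_def
  by (metis disjnt_def open_openin separation_t2)

lemma LC1:
  assumes "locally_compact_space (euclidean :: 'a::t2_space topology)" "compact (K::'a set)"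
  obtains P L where "open P" "compact L" "K \<subseteq> P" "P \<subseteq> L"
proof -
  have "\<forall>K. compactin euclidean K
              \<longrightarrow> (\<exists>U L. openin (euclidean::'a topology) U \<and> compactin euclidean L \<and> closedin euclidean L \<and> K \<subseteq> U \<and> U \<subseteq> L)"
    using locally_compact_space_compact_closed_compact[of "euclidean::'a topology"] hausdorff_eucl assms(1) by blast
  then show ?thesis using assms(2) that by (metis compactin_euclidean_iff open_openin)
qed

lemma LC2:
  assumes "locally_compact_space (euclidean :: 'a::t2_space topology)" "open (Z::'a set)" "x \<in> Z"
  obtains P W where "open P" "compact W" "x \<in> P" "P \<subseteq> W" "W \<subseteq> Z"
proof -
  have "neighbourhood_base_of (compactin euclidean) (euclidean::'a topology)"
    using locally_compact_space_neighbourhood_base hausdorff_eucl assms(1) by blast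
  then show ?thesis using assms that unfolding neighbourhood_base_of
    by (metis compactin_euclidean_iff open_openin)
qed

lemma open_pre:
  fixes f :: "'a::topological_space \<Rightarrow> 'b::topological_space"
  assumes "continuous_on UNIV f" "open A"
  shows "open {x. f x \<in> A}"
  using open_vimage[OF assms(2,1)] by (simp add: vimage_def)

lemma trans_img: "(\<lambda>p. t + p) ` A = {p. -t + p \<in> (A::'a::group_add set)}"
proof safe
  fix x assume "x \<in> A" then show "-t + (t + x) \<in> A" by (simp add: add.assoc[symmetric])
next
  fix x assume "-t + x \<in> A" then show "x \<in> (\<lambda>p. t + p) ` A"
    by (rule rev_image_eqI) (simp add: add.assoc[symmetric])
qed

lemma rtrans_img: "(\<lambda>p. p + t) ` A = {p. p + -t \<in> (A::'a::group_add set)}"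
proof safe
  fix x assume "x \<in> A" then show "x + t + -t \<in> A" by (simp add: add.assoc)
next
  fix x assume "x + -t \<in> A" then show "x \<in> (\<lambda>p. p + t) ` A"
    by (rule rev_image_eqI) (simp add: add.assoc)
qed

lemma open_trans: "open A \<Longrightarrow> open ((\<lambda>p. t + p) ` (A::'a::topological_group_add set))"
  unfolding trans_img by (rule open_pre) (auto intro!: continuous_intros)

lemma open_rtrans: "open A \<Longrightarrow> open ((\<lambda>p. p + t) ` (A::'a::topological_group_add set))"
  unfolding rtrans_img by (rule open_pre) (auto intro!: continuous_intros)

lemma compact_trans: "compact A \<Longrightarrow> compact ((\<lambda>p. t + p) ` (A::'a::topological_group_add set))"
  by (rule compact_continuous_image) (auto intro!: continuous_intros)

lemma compact_rtrans: "compact A \<Longrightarrow> compact ((\<lambda>p. p + t) ` (A::'a::topological_group_add set))"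
  by (rule compact_continuous_image) (auto intro!: continuous_intros)

lemma compact_neg: "compact A \<Longrightarrow> compact (uminus ` (A::'a::topological_group_add set))"
  by (rule compact_continuous_image) (auto intro!: continuous_intros)

lemma L2:
  assumes "open N" "(0::'a::topological_group_add) \<in> N"
  obtains Z where "open Z" "0 \<in> Z" "\<And>a b. a \<in> Z \<Longrightarrow> b \<in> Z \<Longrightarrow> a + b \<in> N"
proof -
  have c: "continuous_on UNIV (\<lambda>p::'a\<times>'a. fst p + snd p)"
    by (auto intro!: continuous_intros)
  have "open ((\<lambda>p::'a\<times>'a. fst p + snd p) -` N)" by (rule open_vimage[OF assms(1) c])
  moreover have "(0,0) \<in> (\<lambda>p::'a\<times>'a. fst p + snd p) -` N" using assms by simp
  ultimately obtain A B where AB: "open A" "open B" "(0,0) \<in> A \<times> B" "A \<times> B \<subseteq> (\<lambda>p::'a\<times>'a. fst p + snd p) -` N"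
    by (rule open_prod_elim)
  show ?thesis
  proof (rule that[of "A \<inter> B"])
    show "open (A \<inter> B)" using AB by auto
    show "0 \<in> A \<inter> B" using AB by auto
    fix a b assume "a \<in> A \<inter> B" "b \<in> A \<inter> B"
    then have "(a,b) \<in> A \<times> B" by auto
    then show "a + b \<in> N" using AB(4) by auto
  qed
qed

lemma L2sym:
  assumes "open N" "(0::'a::topological_group_add) \<in> N"
  obtains Z where "open Z" "0 \<in> Z" "\<And>a b. a \<in> Z \<Longrightarrow> b \<in> Z \<Longrightarrow> a + b \<in> N" "\<And>a. a \<in> Z \<Longrightarrow> -a \<in> Z"
proof -
  obtain Z where Z: "open Z" "0 \<in> Z" "\<And>a b. a \<in> Z \<Longrightarrow> b \<in> Z \<Longrightarrow> a + b \<in> N"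
    using L2[OF assms] by blast
  let ?Z = "Z \<inter> {x. -x \<in> Z}"
  have "open {x. -x \<in> Z}" by (rule open_pre) (auto intro!: continuous_intros Z)
  then show ?thesis using Z by (intro that[of ?Z]) auto
qed

lemma L1:
  assumes "compact K" "open Ob" "K \<subseteq> (Ob::'a::topological_group_add set)"
  obtains Z where "open Z" "0 \<in> Z" "\<And>k z. k \<in> K \<Longrightarrow> z \<in> Z \<Longrightarrow> k + z \<in> Ob"
proof -
  have "\<forall>k\<in>K. \<exists>Z. open Z \<and> 0 \<in> Z \<and> (\<forall>a\<in>Z. \<forall>b\<in>Z. k + (a + b) \<in> Ob)"
  proof
    fix k assume k: "k \<in> K"
    have o1: "open {x. k + x \<in> Ob}" by (rule open_pre) (auto intro!: continuous_intros assms)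
    have o2: "0 \<in> {x. k + x \<in> Ob}" using k assms by auto
    obtain Z where "open Z" "0 \<in> Z" "\<And>a b. a \<in> Z \<Longrightarrow> b \<in> Z \<Longrightarrow> a + b \<in> {x. k + x \<in> Ob}"
      using L2[OF o1 o2] by blast
    then show "\<exists>Z. open Z \<and> 0 \<in> Z \<and> (\<forall>a\<in>Z. \<forall>b\<in>Z. k + (a + b) \<in> Ob)" by blast
  qed
  then obtain ZZ where ZZ: "\<And>k. k \<in> K \<Longrightarrow> open (ZZ k) \<and> 0 \<in> ZZ k \<and> (\<forall>a\<in>ZZ k. \<forall>b\<in>ZZ k. k + (a + b) \<in> Ob)"
    by metis
  have cov: "K \<subseteq> (\<Union>k\<in>K. {x. -k + x \<in> ZZ k})"
  proof
    fix x assume "x \<in> K" then show "x \<in> (\<Union>k\<in>K. {x. -k + x \<in> ZZ k})" using ZZ by (auto intro!: bexI[of _ x])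
  qed
  have opn: "open {x. -k + x \<in> ZZ k}" if "k \<in> K" for k
    by (rule open_pre) (auto intro!: continuous_intros ZZ[OF that, THEN conjunct1])
  obtain F where F: "F \<subseteq> K" "finite F" "K \<subseteq> (\<Union>k\<in>F. {x. -k + x \<in> ZZ k})"
    by (rule compactE_image[OF assms(1) opn cov]) auto
  show ?thesis
  proof (rule that[of "\<Inter>k\<in>F. ZZ k"])
    show "open (\<Inter>k\<in>F. ZZ k)" using F ZZ by (intro open_INT) auto
    show "0 \<in> (\<Inter>k\<in>F. ZZ k)" using F ZZ by auto
    fix k z assume kz: "k \<in> K" "z \<in> (\<Inter>k\<in>F. ZZ k)"
    then obtain k0 where k0: "k0 \<in> F" "-k0 + k \<in> ZZ k0" using F by auto
    have "z \<in> ZZ k0" using kz k0 by auto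
    then have "k0 + ((-k0 + k) + z) \<in> Ob" using ZZ k0 F by auto
    then show "k + z \<in> Ob" by (simp add: add.assoc[symmetric])
  qed
qed

lemma L4:
  assumes "compact L" "open V" "(0::'a::topological_group_add) \<in> V"
  obtains U where "open U" "0 \<in> U" "\<And>y u. y \<in> L \<Longrightarrow> u \<in> U \<Longrightarrow> -y + u + y \<in> V"
proof -
  obtain V1 where V1: "open V1" "0 \<in> V1" "\<And>a b. a \<in> V1 \<Longrightarrow> b \<in> V1 \<Longrightarrow> a + b \<in> V"
    using L2[OF assms(2,3)] by blast
  obtain V2 where V2: "open V2" "0 \<in> V2" "\<And>a b. a \<in> V2 \<Longrightarrow> b \<in> V2 \<Longrightarrow> a + b \<in> V1" "\<And>a. a \<in> V2 \<Longrightarrow> -a \<in> V2"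
    using L2sym[OF V1(1,2)] by blast
  define UU where "UU y0 = {u. -y0 + u + y0 \<in> V2}" for y0
  have opU: "open (UU y0)" for y0 unfolding UU_def by (rule open_pre) (auto intro!: continuous_intros V2)
  have cov: "L \<subseteq> (\<Union>y0\<in>L. {y. -y0 + y \<in> V2})"
  proof
    fix x assume "x \<in> L" then show "x \<in> (\<Union>y0\<in>L. {y. -y0 + y \<in> V2})" using V2 by (auto intro!: bexI[of _ x])
  qed
  have opn: "\<And>k. k \<in> L \<Longrightarrow> open {x. -k + x \<in> V2}"
    by (rule open_pre) (auto intro!: continuous_intros V2)
  obtain F where F: "F \<subseteq> L" "finite F" "L \<subseteq> (\<Union>k\<in>F. {x. -k + x \<in> V2})"
    by (rule compactE_image[OF assms(1) opn cov]) auto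
  show ?thesis
  proof (rule that[of "\<Inter>k\<in>F. UU k"])
    show "open (\<Inter>k\<in>F. UU k)" using F opU by (intro open_INT) auto
    show "0 \<in> (\<Inter>k\<in>F. UU k)" using F V2 by (auto simp: UU_def)
    fix y u assume yu: "y \<in> L" "u \<in> (\<Inter>k\<in>F. UU k)"
    then obtain k0 where k0: "k0 \<in> F" "-k0 + y \<in> V2" using F by auto
    have u': "-k0 + u + k0 \<in> V2" using yu k0 by (auto simp: UU_def)
    have m: "-(-k0 + y) \<in> V2" using V2(4) k0 by blast
    have "-(-k0 + y) + (-k0 + u + k0) \<in> V1" using V2(3)[OF m u'] .
    moreover have "-k0 + y \<in> V1" using V2(3)[OF k0(2) V2(2)] by simp
    ultimately have "-(-k0 + y) + (-k0 + u + k0) + (-k0 + y) \<in> V" using V1(3) by blast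
    moreover have "-(-k0 + y) + (-k0 + u + k0) + (-k0 + y) = -y + u + y"
      by (simp add: minus_add add.assoc)
    ultimately show "-y + u + y \<in> V" by simp
  qed
qed

definition pset :: "'a::plus set \<Rightarrow> 'a set \<Rightarrow> 'a set" where
  "pset A B = {a + b | a b. a \<in> A \<and> b \<in> B}"

lemma compact_pset:
  assumes "compact A" "compact (B::'a::topological_group_add set)"
  shows "compact (pset A B)"
proof -
  have "pset A B = (\<lambda>p. fst p + snd p) ` (A \<times> B)" unfolding pset_def by force
  moreover have "compact ((\<lambda>p. fst p + snd p) ` (A \<times> B))"
    by (rule compact_continuous_image) (auto intro!: continuous_intros compact_Times assms)
  ultimately show ?thesis by simp
qed

definition sum6 :: "'a::plus set \<Rightarrow> 'a set" where
  "sum6 S = pset (pset (pset (pset (pset S S) S) S) S) S"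

lemma compact_sum6: "compact S \<Longrightarrow> compact (sum6 (S::'a::topological_group_add set))"
  unfolding sum6_def by (intro compact_pset)

lemma mem6: assumes "a1 \<in> S" "a2 \<in> S" "a3 \<in> S" "a4 \<in> S" "a5 \<in> S" "a6 \<in> S" shows
  "a1 + a2 + a3 + a4 + a5 + a6 \<in> sum6 S"
proof -
  have m: "\<And>a b A B. a \<in> A \<Longrightarrow> b \<in> B \<Longrightarrow> a + b \<in> pset A B" unfolding pset_def by blast
  show ?thesis unfolding sum6_def by (intro m) (simp_all add: assms)
qed

lemma Lgen:
  assumes "compact W" "open Wa" "W \<subseteq> (Wa::'a::topological_group_add set)"
  obtains V where "open V" "0 \<in> V" "\<And>v1 v2 w. v1 \<in> V \<Longrightarrow> v2 \<in> V \<Longrightarrow> w \<in> W \<Longrightarrow> -v1 + w + v2 \<in> Wa"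
proof -
  obtain V0 where V0: "open V0" "0 \<in> V0" "\<And>k z. k \<in> W \<Longrightarrow> z \<in> V0 \<Longrightarrow> k + z \<in> Wa"
    using L1[OF assms] by blast
  obtain V1 where V1: "open V1" "0 \<in> V1" "\<And>a b. a \<in> V1 \<Longrightarrow> b \<in> V1 \<Longrightarrow> a + b \<in> V0"
    using L2[OF V0(1,2)] by blast
  obtain V2 where V2: "open V2" "0 \<in> V2" "\<And>y u. y \<in> W \<Longrightarrow> u \<in> V2 \<Longrightarrow> -y + u + y \<in> V1"
    using L4[OF assms(1) V1(1,2)] by blast
  have o: "open {v. -v \<in> V2}" by (rule open_pre) (auto intro!: continuous_intros V2)
  show ?thesis
  proof (rule that[of "V1 \<inter> {v. -v \<in> V2}"])
    show "open (V1 \<inter> {v. -v \<in> V2})" using o V1 by auto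
    show "0 \<in> V1 \<inter> {v. -v \<in> V2}" using V1 V2 by auto
    fix v1 v2 w assume a: "v1 \<in> V1 \<inter> {v. -v \<in> V2}" "v2 \<in> V1 \<inter> {v. -v \<in> V2}" "w \<in> W"
    have "-w + -v1 + w \<in> V1" using V2(3)[OF a(3), of "-v1"] a(1) by auto
    then have "(-w + -v1 + w) + v2 \<in> V0" using V1(3) a(2) by auto
    then have "w + ((-w + -v1 + w) + v2) \<in> Wa" using V0(3) a(3) by auto
    then show "-v1 + w + v2 \<in> Wa" by (simp only: add.assoc[symmetric] add.right_inverse add_0_left)
  qed
qed

lemma haar_facts:
  assumes "left_haar_measure (M::'a::{topological_group_add,t2_space} measure)"
  shows "sets M = sets borel" "\<And>K. compact K \<Longrightarrow> emeasure M K < \<infinity>"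
    "\<And>A. A \<in> sets borel \<Longrightarrow> emeasure M A = (INF U\<in>{U. open U \<and> A \<subseteq> U}. emeasure M U)"
    "\<And>U. open U \<Longrightarrow> emeasure M U = (SUP K\<in>{K. compact K \<and> K \<subseteq> U}. emeasure M K)"
    "emeasure M UNIV \<noteq> 0"
    "\<And>g A. A \<in> sets borel \<Longrightarrow> emeasure M ((\<lambda>x. g + x) ` A) = emeasure M A"
  using assms unfolding left_haar_measure_def radon_measure_def by auto

lemma compact_borel: "compact (K::'a::t2_space set) \<Longrightarrow> K \<in> sets borel"
  by (simp add: compact_imp_closed borel_closed)

lemma pos_open:
  assumes lh: "left_haar_measure (M::'a::{topological_group_add,t2_space} measure)"
    and "open V" "v \<in> V"
  shows "emeasure M V \<noteq> 0"
proof
  assume z: "emeasure M V = 0"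
  note hf = haar_facts[OF lh]
  have c0: "emeasure M K = 0" if K: "compact K" for K
  proof -
    have cov: "K \<subseteq> (\<Union>k\<in>K. (\<lambda>p. (k + -v) + p) ` V)"
    proof
      fix x assume "x \<in> K"
      moreover have "x = (x + -v) + v" by (simp add: add.assoc)
      ultimately show "x \<in> (\<Union>k\<in>K. (\<lambda>p. (k + -v) + p) ` V)" using assms(3) by blast
    qed
    obtain F where F: "F \<subseteq> K" "finite F" "K \<subseteq> (\<Union>k\<in>F. (\<lambda>p. (k + -v) + p) ` V)"
      by (rule compactE_image[OF K _ cov]) (auto intro: open_trans assms(2))
    have s: "(\<lambda>k. (\<lambda>p. (k + -v) + p) ` V) ` F \<subseteq> sets M"
      using hf(1) assms(2) by (auto intro!: borel_open open_trans)
    have "emeasure M K \<le> emeasure M (\<Union>k\<in>F. (\<lambda>p. (k + -v) + p) ` V)"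
      by (rule emeasure_mono[OF F(3)]) (use s F in auto)
    also have "\<dots> \<le> (\<Sum>k\<in>F. emeasure M ((\<lambda>p. (k + -v) + p) ` V))"
      by (rule emeasure_subadditive_finite[OF F(2) s])
    also have "\<dots> = 0" using hf(6) assms(2) z by (simp add: borel_open)
    finally show ?thesis by simp
  qed
  have "emeasure M UNIV = (SUP K\<in>{K. compact K \<and> K \<subseteq> UNIV}. emeasure M K)" using hf(4) by simp
  also have "\<dots> \<le> 0" by (rule SUP_least) (simp add: c0)
  finally show False using hf(5) by simp
qed

lemma fin_eq: "emeasure M A < \<infinity> \<Longrightarrow> emeasure M A = ennreal (measure M A)"
  by (rule emeasure_eq_ennreal_measure) simp

lemma outer_approx:
  assumes lh: "left_haar_measure (M::'a::{topological_group_add,t2_space} measure)"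
    and "A \<in> sets borel" "emeasure M A < \<infinity>" "(d::real) > 0"
  obtains U where "open U" "A \<subseteq> U" "emeasure M U < \<infinity>" "measure M U < measure M A + d"
proof -
  note hf = haar_facts[OF lh]
  have eA: "emeasure M A = ennreal (measure M A)" using fin_eq[OF assms(3)] .
  have "ennreal (measure M A) < ennreal (measure M A + d)" using assms(4)
    by (simp add: ennreal_less_iff)
  also have "\<dots> = ennreal (measure M A) + ennreal d" using assms(4) by (simp add: ennreal_plus)
  finally have "emeasure M A < emeasure M A + ennreal d" unfolding eA .
  then have "(INF U\<in>{U. open U \<and> A \<subseteq> U}. emeasure M U) < emeasure M A + ennreal d"
    using hf(3)[OF assms(2)] by simp
  then obtain U where U: "open U" "A \<subseteq> U" "emeasure M U < emeasure M A + ennreal d"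
    by (auto simp: INF_less_iff)
  have t: "emeasure M A + ennreal d < \<infinity>" unfolding eA by simp
  have fin: "emeasure M U < \<infinity>" using U(3) t by (rule less_trans)
  have "ennreal (measure M U) < ennreal (measure M A) + ennreal d"
    using U(3) unfolding fin_eq[OF fin] eA .
  also have "\<dots> = ennreal (measure M A + d)" using assms(4) by (simp add: ennreal_plus)
  finally have "measure M U < measure M A + d"
    using assms(4) by (subst (asm) ennreal_less_iff) auto
  then show ?thesis using U fin that by blast
qed

lemma sum_emeasure_int:
  assumes "finite H" "B \<in> sets M" "\<And>x. x \<in> H \<Longrightarrow> A x \<in> sets M"
  shows "(\<Sum>x\<in>H. emeasure M (B \<inter> A x)) = (\<integral>\<^sup>+y. of_nat (card {x\<in>H. y \<in> A x}) * indicator B y \<partial>M)"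
proof -
  have "(\<Sum>x\<in>H. emeasure M (B \<inter> A x)) = (\<Sum>x\<in>H. \<integral>\<^sup>+y. indicator (B \<inter> A x) y \<partial>M)"
    using assms by (intro sum.cong) auto
  also have "\<dots> = (\<integral>\<^sup>+y. (\<Sum>x\<in>H. indicator (B \<inter> A x) y) \<partial>M)"
    using assms by (intro nn_integral_sum[symmetric]) auto
  also have "\<dots> = (\<integral>\<^sup>+y. of_nat (card {x\<in>H. y \<in> A x}) * indicator B y \<partial>M)"
  proof (intro nn_integral_cong)
    fix y
    have "(\<Sum>x\<in>H. indicator (B \<inter> A x) y :: ennreal) = (\<Sum>x\<in>H. of_bool (y \<in> B \<and> y \<in> A x))"
      by (simp add: indicator_def of_bool_def)
    also have "\<dots> = of_nat (card (H \<inter> {x. y \<in> B \<and> y \<in> A x}))" using assms(1) by simp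
    also have "\<dots> = of_nat (card {x\<in>H. y \<in> A x}) * indicator B y"
      by (cases "y \<in> B") (auto simp: indicator_def Int_def)
    finally show "(\<Sum>x\<in>H. indicator (B \<inter> A x) y :: ennreal) = of_nat (card {x\<in>H. y \<in> A x}) * indicator B y" .
  qed
  finally show ?thesis .
qed

lemma real_lim:
  assumes "\<And>e. (e::real) > 0 \<Longrightarrow> a \<le> (1 + e) * (b + e)" "b \<ge> 0"
  shows "a \<le> b"
proof (rule ccontr)
  assume "\<not> a \<le> b"
  define e where "e = min 1 ((a - b) / (2 * b + 4))"
  have e0: "e > 0" using \<open>\<not> a \<le> b\<close> assms(2) by (auto simp: e_def)
  have e1: "e \<le> 1" "e \<le> (a - b) / (2 * b + 4)" by (auto simp: e_def)
  have "e * (2 * b + 4) \<le> a - b" using e1(2) assms(2) by (simp add: field_simps)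
  moreover have "(1 + e) * (b + e) = b + e * (1 + b + e)" by algebra
  moreover have "e * (1 + b + e) \<le> e * (2 * b + 4)" using e0 e1 assms(2) by (intro mult_left_mono) auto
  moreover have "e * (1 + b + e) < e * (2 * b + 4)" using e0 e1 assms(2) by (intro mult_strict_left_mono) auto
  ultimately have "(1 + e) * (b + e) < a" by linarith
  with assms(1)[OF e0] show False by linarith
qed

lemma id1: "-((a + -b + -c) + (b + -d) + e) + a = -e + d + (-b + c + (b::'a::group_add))"
  by (simp add: minus_add add.assoc diff_conv_add_uminus del: add_uminus_conv_diff)

lemma id2: "y + - (- x + y) = (x::'a::group_add)"
  by (simp add: minus_add add.assoc diff_conv_add_uminus del: add_uminus_conv_diff)

lemma id3: "j = (j + u) + - (u::'a::group_add)"
  by (simp add: add.assoc diff_conv_add_uminus del: add_uminus_conv_diff)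

lemma id4: "- x + (x + u) = (u::'a::group_add)"
  by (simp add: add.assoc[symmetric])

lemma id5: "k + g + -wa + (-g + -u1) + u + w = k + (g + -wa + -g) + -u1 + u + (w::'a::group_add)"
  by (simp add: add.assoc diff_conv_add_uminus del: add_uminus_conv_diff)

lemma id6: "a + -b + -c + (b + -d) = a + -b + -c + b + -(d::'a::group_add)"
  by (simp add: add.assoc diff_conv_add_uminus del: add_uminus_conv_diff)

lemma id7: "k + g + -wa + (-g + -u1) = k + g + -wa + -g + -(u1::'a::group_add)"
  by (simp add: add.assoc diff_conv_add_uminus del: add_uminus_conv_diff)

lemma of_nat_ennreal: "0 \<le> a \<Longrightarrow> of_nat n * ennreal a = ennreal (real n * a)"
  by (simp add: ennreal_of_nat_eq_real_of_nat ennreal_mult)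

lemma main_eps:
  fixes M :: "'a::{topological_group_add,t2_space} measure" and K :: "'a set"
  assumes lc: "locally_compact_space (euclidean::'a topology)"
    and ap: "approximable_by_finite_quasigroups TYPE('a)"
    and lh: "left_haar_measure M"
    and K: "compact K" and e: "(e::real) > 0"
  shows "measure M ((\<lambda>x. x + g) ` K) \<le> (1 + e) * (measure M K + e)"
proof (cases "K = {}")
  case True then show ?thesis using e by simp
next
  case False
  note hf = haar_facts[OF lh]
  define B where "B = (\<lambda>x. x + g) ` K"
  have B: "compact B" "B \<noteq> {}" using False compact_rtrans[OF K] by (auto simp: B_def)
  obtain PL L where PL: "open PL" "compact L" "K \<subseteq> PL" "PL \<subseteq> L" using LC1[OF lc K] by blast
  have Kb: "K \<in> sets borel" "emeasure M K < \<infinity>" using K hf(2) compact_borel by auto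
  obtain O1 where O1: "open O1" "K \<subseteq> O1" "emeasure M O1 < \<infinity>" "measure M O1 < measure M K + e"
    using outer_approx[OF lh Kb e] by blast
  define Ob where "Ob = O1 \<inter> PL"
  have Ob: "open Ob" "K \<subseteq> Ob" "Ob \<subseteq> L" using O1 PL by (auto simp: Ob_def)
  have Obs: "Ob \<in> sets M" using Ob hf(1) by (simp add: borel_open)
  have ObL: "emeasure M Ob < \<infinity>"
  proof -
    have "emeasure M Ob \<le> emeasure M L" by (rule emeasure_mono) (use Ob PL hf(1) in \<open>auto simp: compact_borel\<close>)
    then show ?thesis using hf(2)[OF PL(2)] by (rule le_less_trans)
  qed
  have mO: "measure M Ob \<le> measure M K + e"
  proof -
    have "measure M Ob \<le> measure M O1"
      using O1 Obs hf(1) by (intro measure_mono_fmeasurable) (auto simp: Ob_def fmeasurable_def borel_open)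
    then show ?thesis using O1 by simp
  qed
  obtain P0 W0 where W0: "open P0" "compact W0" "(0::'a) \<in> P0" "P0 \<subseteq> W0" "W0 \<subseteq> UNIV"
    by (rule LC2[OF lc open_UNIV UNIV_I[of 0]])
  obtain Z0 where Z0: "open Z0" "0 \<in> Z0" "\<And>k z. k \<in> K \<Longrightarrow> z \<in> Z0 \<Longrightarrow> k + z \<in> Ob"
    using L1[OF K Ob(1) Ob(2)] by blast
  obtain Z' where Z': "open Z'" "0 \<in> Z'" "\<And>a b. a \<in> Z' \<Longrightarrow> b \<in> Z' \<Longrightarrow> a + b \<in> Z0"
    using L2[OF Z0(1,2)] by blast
  obtain Z'' where Z'': "open Z''" "0 \<in> Z''" "\<And>a b. a \<in> Z'' \<Longrightarrow> b \<in> Z'' \<Longrightarrow> a + b \<in> Z'"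
    using L2[OF Z'(1,2)] by blast
  define Z where "Z = Z'' \<inter> P0"
  have Z: "open Z" "0 \<in> Z" "Z \<subseteq> W0" using Z'' W0 by (auto simp: Z_def)
  have Z4: "k + z1 + z2 + z3 + z4 \<in> Ob" if "k \<in> K" "z1 \<in> Z" "z2 \<in> Z" "z3 \<in> Z" "z4 \<in> Z" for k z1 z2 z3 z4
  proof -
    have "z1 + z2 \<in> Z'" "z3 + z4 \<in> Z'" using that Z'' by (auto simp: Z_def)
    then have "(z1 + z2) + (z3 + z4) \<in> Z0" using Z' by blast
    then have "k + ((z1 + z2) + (z3 + z4)) \<in> Ob" using Z0 that by blast
    then show ?thesis by (simp add: add.assoc)
  qed
  define Z1 where "Z1 = {w. w \<in> Z \<and> g + -w + -g \<in> Z}"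
  have Z1: "open Z1" "0 \<in> Z1" "Z1 \<subseteq> Z"
  proof -
    have "open {w. g + -w + -g \<in> Z}" by (rule open_pre) (auto intro!: continuous_intros Z)
    then have "open (Z \<inter> {w. g + -w + -g \<in> Z})" using Z by auto
    moreover have "Z1 = Z \<inter> {w. g + -w + -g \<in> Z}" by (auto simp: Z1_def)
    ultimately show "open Z1" by simp
    show "0 \<in> Z1" using Z by (simp add: Z1_def)
    show "Z1 \<subseteq> Z" by (auto simp: Z1_def)
  qed
  obtain Pb Wb where Wb: "open Pb" "compact Wb" "0 \<in> Pb" "Pb \<subseteq> Wb" "Wb \<subseteq> Z1"
    using LC2[OF lc Z1(1,2)] by blast
  have Wbb: "Wb \<in> sets borel" "emeasure M Wb < \<infinity>" using Wb hf(2) compact_borel by auto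
  define mb where "mb = measure M Wb"
  have mb: "mb > 0"
  proof -
    have "emeasure M Pb \<noteq> 0" using pos_open[OF lh Wb(1,3)] .
    moreover have "emeasure M Pb \<le> emeasure M Wb"
      using Wb hf(1) by (intro emeasure_mono) (auto simp: compact_borel)
    ultimately have "emeasure M Wb \<noteq> 0" by auto
    then have "mb \<noteq> 0" unfolding mb_def using fin_eq[OF Wbb(2)] by auto
    then show ?thesis by (simp add: mb_def order_less_le)
  qed
  have emb: "emeasure M Wb = ennreal mb" unfolding mb_def by (rule fin_eq[OF Wbb(2)])
  have emb0: "e * mb > 0" using e mb by simp
  obtain Wa1 where Wa1: "open Wa1" "Wb \<subseteq> Wa1" "emeasure M Wa1 < \<infinity>" "measure M Wa1 < measure M Wb + e * mb"
    by (rule outer_approx[OF lh Wbb emb0])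
  define Wa where "Wa = Wa1 \<inter> Z1"
  have Wa: "open Wa" "Wb \<subseteq> Wa" "Wa \<subseteq> Z1" using Wa1 Z1 Wb by (auto simp: Wa_def)
  have Was: "Wa \<in> sets M" using Wa hf(1) by (simp add: borel_open)
  have WaL: "emeasure M Wa < \<infinity>"
  proof -
    have "emeasure M Wa \<le> emeasure M Wa1" by (rule emeasure_mono) (use Wa1 hf(1) in \<open>auto simp: Wa_def borel_open\<close>)
    then show ?thesis using Wa1(3) by (rule le_less_trans)
  qed
  have ma: "measure M Wa \<le> (1 + e) * mb"
  proof -
    have "measure M Wa \<le> measure M Wa1"
      using Wa1 Was hf(1) by (intro measure_mono_fmeasurable) (auto simp: Wa_def fmeasurable_def borel_open)
    then show ?thesis using Wa1(4) unfolding mb_def by (simp add: algebra_simps)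
  qed
  obtain V where V: "open V" "0 \<in> V" "\<And>v1 v2 w. v1 \<in> V \<Longrightarrow> v2 \<in> V \<Longrightarrow> w \<in> Wb \<Longrightarrow> -v1 + w + v2 \<in> Wa"
    using Lgen[OF Wb(2) Wa(1) Wa(2)] by blast
  obtain U0 where U0: "open U0" "0 \<in> U0" "\<And>y u. y \<in> L \<Longrightarrow> u \<in> U0 \<Longrightarrow> -y + u + y \<in> V"
    using L4[OF PL(2) V(1,2)] by blast
  define U where "U = U0 \<inter> V \<inter> Pb \<inter> {u. -u \<in> Z}"
  have U: "open U" "0 \<in> U" "U \<subseteq> V" "U \<subseteq> Pb" "\<And>u. u \<in> U \<Longrightarrow> -u \<in> Z"
    "\<And>y u. y \<in> L \<Longrightarrow> u \<in> U \<Longrightarrow> -y + u + y \<in> V"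
  proof -
    have "open {u. -u \<in> Z}" by (rule open_pre) (auto intro!: continuous_intros Z)
    then show "open U" using U0 V Wb by (auto simp: U_def)
  qed (use U0 V Wb Z in \<open>auto simp: U_def\<close>)
  have sub: "U \<subseteq> Wa" "Wb \<subseteq> Z" "Wa \<subseteq> Z" "Z \<subseteq> W0" using U Wb Wa Z1 Z by auto
  define S where "S = {0, g, -g} \<union> L \<union> uminus ` L \<union> B \<union> W0 \<union> uminus ` W0"
  have S: "compact S"
  proof -
    have c1: "compact {0, g, -g}" by (rule finite_imp_compact) simp
    have c2: "compact (uminus ` L)" "compact (uminus ` W0)" using compact_neg PL(2) W0(2) by auto
    show ?thesis unfolding S_def
      by (intro compact_Un c1 c2 PL(2) W0(2) B(1))
  qed
  have S0: "0 \<in> S" "g \<in> S" "-g \<in> S" "L \<subseteq> S" "\<And>y. y \<in> L \<Longrightarrow> -y \<in> S" "B \<subseteq> S" "W0 \<subseteq> S"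
     "\<And>y. y \<in> W0 \<Longrightarrow> -y \<in> S" by (auto simp: S_def)
  define C where "C = sum6 S"
  have C: "compact C" unfolding C_def by (rule compact_sum6[OF S])
  have Cmem: "a1 + a2 + a3 + a4 + a5 + a6 \<in> C"
    if "a1 \<in> S" "a2 \<in> S" "a3 \<in> S" "a4 \<in> S" "a5 \<in> S" "a6 \<in> S" for a1 a2 a3 a4 a5 a6
    unfolding C_def using that by (rule mem6)
  obtain H op j where qg: "finite_quasigroup H op" "inj_on j H" "CU_approximation C U H op j"
    using ap C U(1,2) unfolding approximable_by_finite_quasigroups_def by blast
  have Q: "\<forall>a\<in>H. \<forall>b\<in>H. (\<exists>!x. x \<in> H \<and> op a x = b) \<and> (\<exists>!x. x \<in> H \<and> op x a = b)"
    and finH: "finite H" and clo: "\<And>a b. a \<in> H \<Longrightarrow> b \<in> H \<Longrightarrow> op a b \<in> H"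
    using qg(1) unfolding finite_quasigroup_def by auto
  have lc1: "x1 = x2" if "a \<in> H" "x1 \<in> H" "x2 \<in> H" "op a x1 = op a x2" for a x1 x2
  proof -
    have "\<exists>!x. x \<in> H \<and> op a x = op a x1" using Q that(1) clo[OF that(1,2)] by simp
    then obtain x0 where x0: "\<And>x. x \<in> H \<and> op a x = op a x1 \<Longrightarrow> x = x0" by (elim ex1E) blast
    have "x1 = x0" using x0[of x1] that by blast
    moreover have "x2 = x0" using x0[of x2] that by (simp only:)
    ultimately show ?thesis by simp
  qed
  have rc1: "x1 = x2" if "b \<in> H" "x1 \<in> H" "x2 \<in> H" "op x1 b = op x2 b" for b x1 x2
  proof -
    have "\<exists>!x. x \<in> H \<and> op x b = op x1 b" using Q that(1) clo[OF that(2,1)] by simp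
    then obtain x0 where x0: "\<And>x. x \<in> H \<and> op x b = op x1 b \<Longrightarrow> x = x0" by (elim ex1E) blast
    have "x1 = x0" using x0[of x1] that by blast
    moreover have "x2 = x0" using x0[of x2] that by (simp only:)
    ultimately show ?thesis by simp
  qed
  have cov0: "C \<subseteq> {j h + u | h u. h \<in> H \<and> u \<in> U}" and
    mul0: "\<forall>x\<in>H. \<forall>y\<in>H. j x \<in> C \<and> j y \<in> C \<and> j x + j y \<in> C \<longrightarrow>
        j (op x y) \<in> {j x + j y + u | u. u \<in> U}"
    using qg(3) unfolding CU_approximation_def by auto
  have cov: "\<exists>h\<in>H. \<exists>u\<in>U. y = j h + u" if "y \<in> C" for y
    using cov0 that by blast
  have mul: "\<exists>u\<in>U. j (op x y) = j x + j y + u"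
    if "x \<in> H" "y \<in> H" "j x \<in> C" "j y \<in> C" "j x + j y \<in> C" for x y
  proof -
    have "j (op x y) \<in> {j x + j y + u | u. u \<in> U}" using mul0 that by blast
    then show ?thesis by blast
  qed
  have SL: "y \<in> S" if "y \<in> L" for y using S0(4) that by (rule subsetD)
  have SB: "y \<in> S" if "y \<in> B" for y using S0(6) that by (rule subsetD)
  have SW: "-w \<in> S" if "w \<in> Z" for w using S0(8) sub(4) that by auto
  have UW: "u \<in> Wb" if "u \<in> U" for u using U(4) Wb(4) that by auto
  have UW2: "u \<in> Wa" "u \<in> Z" "-u \<in> S" if "u \<in> U" for u
    using UW[OF that] Wa(2) sub(2) SW by auto
  define fa where "fa y = card {x\<in>H. -j x + y \<in> Wa}" for y
  define fb where "fb y = card {x\<in>H. -j x + y \<in> Wb}" for y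
  have F2: "fb y \<le> fa y'" if y: "y \<in> Ob" "y' \<in> B" for y y'
  proof -
    have yL: "y \<in> L" using y Ob by auto
    have "y' + -y + 0 + 0 + 0 + 0 \<in> C" by (rule Cmem) (use SB[OF y(2)] S0(5)[OF yL] S0(1) in auto)
    then have "y' + -y \<in> C" by simp
    then obtain a u1 where a: "a \<in> H" "u1 \<in> U" "y' + -y = j a + u1" using cov by blast
    have ja: "j a = y' + -y + -u1" using id3[of "j a" u1] a(3) by simp
    show ?thesis unfolding fa_def fb_def
    proof (rule card_inj_on_le[where f = "op a"])
      show "finite {x \<in> H. - j x + y' \<in> Wa}" using finH by simp
      show "inj_on (op a) {x \<in> H. - j x + y \<in> Wb}" by (rule inj_onI) (use lc1 a(1) in blast)
      show "op a ` {x \<in> H. - j x + y \<in> Wb} \<subseteq> {x \<in> H. - j x + y' \<in> Wa}"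
      proof
        fix z assume "z \<in> op a ` {x \<in> H. - j x + y \<in> Wb}"
        then obtain x where x: "x \<in> H" "- j x + y \<in> Wb" and z: "z = op a x" by blast
        define w where "w = - j x + y"
        have w: "w \<in> Wb" using x w_def by simp
        have wZ: "w \<in> Z" using w sub(2) by auto
        have jx: "j x = y + -w" unfolding w_def using id2[of y "j x"] by simp
        have c1: "j x \<in> C" unfolding jx
          using Cmem[OF SL[OF yL] SW[OF wZ] S0(1) S0(1) S0(1) S0(1)] by simp
        have c2: "j a \<in> C" unfolding ja
          using Cmem[OF SB[OF y(2)] S0(5)[OF yL] UW2(3)[OF a(2)] S0(1) S0(1) S0(1)] by simp
        have c3: "j a + j x \<in> C" unfolding ja jx id6
          using Cmem[OF SB[OF y(2)] S0(5)[OF yL] UW2(3)[OF a(2)] SL[OF yL] SW[OF wZ] S0(1)] by simp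
        obtain u where u: "u \<in> U" "j (op a x) = j a + j x + u" using mul[OF a(1) x(1) c2 c1 c3] by blast
        have "- j (op a x) + y' = -u + w + (-y + u1 + y)" unfolding u(2) ja jx by (rule id1)
        moreover have "-u + w + (-y + u1 + y) \<in> Wa"
          using V(3)[of u "-y + u1 + y" w] U(3) U(6)[OF yL a(2)] u(1) w by blast
        ultimately have "- j (op a x) + y' \<in> Wa" by simp
        then show "z \<in> {x \<in> H. - j x + y' \<in> Wa}" using clo[OF a(1) x(1)] z by simp
      qed
    qed
  qed
  have F3: "1 \<le> fa y'" if y: "y' \<in> B" for y'
  proof -
    have "y' + 0 + 0 + 0 + 0 + 0 \<in> C" by (rule Cmem) (use SB[OF y] S0(1) in auto)
    then have "y' \<in> C" by simp
    then obtain h u where h: "h \<in> H" "u \<in> U" "y' = j h + u" using cov by blast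
    have "- j h + y' \<in> Wa" using h id4[of "j h" u] UW2(1)[OF h(2)] by simp
    then have "h \<in> {x\<in>H. -j x + y' \<in> Wa}" using h by simp
    moreover have "finite {x\<in>H. -j x + y' \<in> Wa}" using finH by simp
    ultimately show ?thesis unfolding fa_def by (metis One_nat_def Suc_leI card_gt_0_iff empty_iff)
  qed
  define c where "c = Min (fa ` B)"
  have finfa: "finite (fa ` B)"
  proof (rule finite_subset)
    show "fa ` B \<subseteq> {..card H}" unfolding fa_def using finH by (auto intro!: card_mono)
  qed simp
  have c: "1 \<le> c" "\<And>y'. y' \<in> B \<Longrightarrow> c \<le> fa y'" "\<And>y. y \<in> Ob \<Longrightarrow> fb y \<le> c"
  proof -
    have cin: "c \<in> fa ` B" unfolding c_def by (rule Min_in[OF finfa]) (use B(2) in simp)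
    then obtain y0 where y0: "y0 \<in> B" "c = fa y0" by blast
    show "1 \<le> c" using F3[OF y0(1)] y0(2) by simp
    show "\<And>y'. y' \<in> B \<Longrightarrow> c \<le> fa y'" unfolding c_def using finfa by simp
    show "\<And>y. y \<in> Ob \<Longrightarrow> fb y \<le> c" using F2 y0 by simp
  qed
  define X1 where "X1 = {x\<in>H. \<exists>p\<in>B. -j x + p \<in> Wa}"
  define X2 where "X2 = {x\<in>H. \<forall>w\<in>Wb. j x + w \<in> Ob}"
  have X12: "card X1 \<le> card X2"
  proof -
    have "-g + 0 + 0 + 0 + 0 + 0 \<in> C" by (rule Cmem) (use S0 in auto)
    then have "-g \<in> C" by simp
    then obtain b u1 where b: "b \<in> H" "u1 \<in> U" "-g = j b + u1" using cov by blast
    have jb: "j b = -g + -u1" using id3[of "j b" u1] b(3) by simp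
    show ?thesis
    proof (rule card_inj_on_le[where f = "\<lambda>x. op x b"])
      show "finite X2" using finH by (simp add: X2_def)
      show "inj_on (\<lambda>x. op x b) X1" by (rule inj_onI) (use rc1 b(1) in \<open>auto simp: X1_def\<close>)
      show "(\<lambda>x. op x b) ` X1 \<subseteq> X2"
      proof
        fix z assume "z \<in> (\<lambda>x. op x b) ` X1"
        then obtain x p where x: "x \<in> H" "p \<in> B" "-j x + p \<in> Wa" and z: "z = op x b"
          unfolding X1_def by blast
        obtain k where k: "k \<in> K" "p = k + g" using x(2) unfolding B_def by blast
        define wa where "wa = -j x + p"
        have wa: "wa \<in> Wa" using x wa_def by simp
        have waZ1: "wa \<in> Z1" using wa Wa(3) by auto
        have waZ: "wa \<in> Z" using waZ1 Z1(3) by auto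
        have jx: "j x = k + g + -wa" unfolding wa_def using id2[of p "j x"] k(2) by simp
        have kS: "k \<in> S" using k(1) PL(3,4) SL by auto
        have c1: "j x \<in> C" unfolding jx
          using Cmem[OF kS S0(2) SW[OF waZ] S0(1) S0(1) S0(1)] by simp
        have c2: "j b \<in> C" unfolding jb
          using Cmem[OF S0(3) UW2(3)[OF b(2)] S0(1) S0(1) S0(1) S0(1)] by simp
        have c3: "j x + j b \<in> C" unfolding jx jb id7
          using Cmem[OF kS S0(2) SW[OF waZ] S0(3) UW2(3)[OF b(2)] S0(1)] by simp
        obtain u where u: "u \<in> U" "j (op x b) = j x + j b + u" using mul[OF x(1) b(1) c1 c2 c3] by blast
        have "\<forall>w\<in>Wb. j (op x b) + w \<in> Ob"
        proof
          fix w assume w: "w \<in> Wb"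
          have "j (op x b) + w = k + (g + -wa + -g) + -u1 + u + w" unfolding u(2) jx jb by (rule id5)
          moreover have "k + (g + -wa + -g) + -u1 + u + w \<in> Ob"
          proof (rule Z4[OF k(1)])
            show "g + -wa + -g \<in> Z" using waZ1 by (simp add: Z1_def)
            show "-u1 \<in> Z" using U(5) b(2) by simp
            show "u \<in> Z" using UW2(2) u(1) by simp
            show "w \<in> Z" using w sub(2) by auto
          qed
          ultimately show "j (op x b) + w \<in> Ob" by simp
        qed
        then show "z \<in> X2" using clo[OF x(1) b(1)] z by (simp add: X2_def)
      qed
    qed
  qed
  define TA where "TA x = {p. -j x + p \<in> Wa}" for x
  define TB where "TB x = {p. -j x + p \<in> Wb}" for x
  have TAi: "TA x = (\<lambda>p. j x + p) ` Wa" for x unfolding TA_def by (rule trans_img[symmetric])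
  have TBi: "TB x = (\<lambda>p. j x + p) ` Wb" for x unfolding TB_def by (rule trans_img[symmetric])
  have TAs: "TA x \<in> sets M" for x unfolding TAi using hf(1) Wa(1) by (simp add: borel_open open_trans)
  have TBs: "TB x \<in> sets M" for x unfolding TBi using hf(1) Wb(2) by (simp add: compact_borel compact_trans)
  have TAm: "emeasure M (TA x) = emeasure M Wa" for x unfolding TAi using hf(6) Wa(1) by (simp add: borel_open)
  have TBm: "emeasure M (TB x) = emeasure M Wb" for x unfolding TBi using hf(6) Wbb(1) by simp
  have Bs: "B \<in> sets M" using hf(1) B(1) by (simp add: compact_borel)
  have ineq_a: "of_nat c * emeasure M B \<le> (\<Sum>x\<in>H. emeasure M (B \<inter> TA x))"
  proof -
    have "of_nat c * emeasure M B = (\<integral>\<^sup>+y. of_nat c * indicator B y \<partial>M)"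
      using Bs by (simp add: nn_integral_cmult_indicator)
    also have "\<dots> \<le> (\<integral>\<^sup>+y. of_nat (card {x\<in>H. y \<in> TA x}) * indicator B y \<partial>M)"
    proof (rule nn_integral_mono)
      fix y
      show "of_nat c * indicator B y \<le> (of_nat (card {x\<in>H. y \<in> TA x}) * indicator B y :: ennreal)"
      proof (cases "y \<in> B")
        case True
        have "card {x\<in>H. y \<in> TA x} = fa y" by (simp add: TA_def fa_def)
        then have "c \<le> card {x\<in>H. y \<in> TA x}" using c(2)[OF True] by simp
        then show ?thesis using True by simp
      qed simp
    qed
    also have "\<dots> = (\<Sum>x\<in>H. emeasure M (B \<inter> TA x))"
      by (rule sum_emeasure_int[symmetric, OF finH Bs TAs])
    finally show ?thesis .
  qed
  have ineq_a2: "(\<Sum>x\<in>H. emeasure M (B \<inter> TA x)) \<le> of_nat (card X1) * emeasure M Wa"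
  proof -
    have "(\<Sum>x\<in>H. emeasure M (B \<inter> TA x)) \<le> (\<Sum>x\<in>H. if (\<exists>p\<in>B. -j x + p \<in> Wa) then emeasure M Wa else 0)"
    proof (rule sum_mono)
      fix x assume "x \<in> H"
      show "emeasure M (B \<inter> TA x) \<le> (if (\<exists>p\<in>B. -j x + p \<in> Wa) then emeasure M Wa else 0)"
      proof (cases "\<exists>p\<in>B. -j x + p \<in> Wa")
        case True
        have "emeasure M (B \<inter> TA x) \<le> emeasure M (TA x)" by (rule emeasure_mono) (auto simp: TAs)
        then show ?thesis using True TAm by simp
      next
        case False
        then have "B \<inter> TA x = {}" by (auto simp: TA_def)
        then show ?thesis using False by simp
      qed
    qed
    also have "\<dots> = (\<Sum>x\<in>X1. emeasure M Wa)"
      unfolding X1_def by (rule sum.inter_filter[symmetric, OF finH])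
    also have "\<dots> = of_nat (card X1) * emeasure M Wa" by simp
    finally show ?thesis .
  qed
  have ineq_b2: "of_nat (card X2) * emeasure M Wb \<le> (\<Sum>x\<in>H. emeasure M (Ob \<inter> TB x))"
  proof -
    have "of_nat (card X2) * emeasure M Wb = (\<Sum>x\<in>X2. emeasure M Wb)" by simp
    also have "\<dots> = (\<Sum>x\<in>X2. emeasure M (Ob \<inter> TB x))"
    proof (rule sum.cong)
      fix x assume x: "x \<in> X2"
      have "TB x \<subseteq> Ob"
      proof
        fix p assume "p \<in> TB x"
        then have "j x + (-j x + p) \<in> Ob" using x by (auto simp: TB_def X2_def)
        then show "p \<in> Ob" by (simp add: add.assoc[symmetric])
      qed
      then have "Ob \<inter> TB x = TB x" by blast
      then show "emeasure M Wb = emeasure M (Ob \<inter> TB x)" using TBm by simp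
    qed simp
    also have "\<dots> \<le> (\<Sum>x\<in>H. emeasure M (Ob \<inter> TB x))"
      by (rule sum_mono2[OF finH]) (auto simp: X2_def)
    finally show ?thesis .
  qed
  have ineq_b: "(\<Sum>x\<in>H. emeasure M (Ob \<inter> TB x)) \<le> of_nat c * emeasure M Ob"
  proof -
    have "(\<Sum>x\<in>H. emeasure M (Ob \<inter> TB x)) = (\<integral>\<^sup>+y. of_nat (card {x\<in>H. y \<in> TB x}) * indicator Ob y \<partial>M)"
      by (rule sum_emeasure_int[OF finH Obs TBs])
    also have "\<dots> \<le> (\<integral>\<^sup>+y. of_nat c * indicator Ob y \<partial>M)"
    proof (rule nn_integral_mono)
      fix y
      show "(of_nat (card {x\<in>H. y \<in> TB x}) * indicator Ob y :: ennreal) \<le> of_nat c * indicator Ob y"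
      proof (cases "y \<in> Ob")
        case True
        have "card {x\<in>H. y \<in> TB x} = fb y" by (simp add: TB_def fb_def)
        then have "card {x\<in>H. y \<in> TB x} \<le> c" using c(3)[OF True] by simp
        then show ?thesis using True by simp
      qed simp
    qed
    also have "\<dots> = of_nat c * emeasure M Ob" using Obs by (simp add: nn_integral_cmult_indicator)
    finally show ?thesis .
  qed
  have E1: "of_nat c * emeasure M B \<le> of_nat (card X2) * emeasure M Wa"
  proof -
    have "of_nat (card X1) * emeasure M Wa \<le> of_nat (card X2) * emeasure M Wa"
      using X12 by (intro mult_right_mono) auto
    then show ?thesis using ineq_a ineq_a2 by order
  qed
  have E2: "of_nat (card X2) * emeasure M Wb \<le> of_nat c * emeasure M Ob"
    using ineq_b ineq_b2 by order
  have BL: "emeasure M B < \<infinity>" using hf(2) B(1) by simp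
  have R1: "real c * measure M B \<le> real (card X2) * measure M Wa"
  proof -
    have "ennreal (real c * measure M B) \<le> ennreal (real (card X2) * measure M Wa)"
      using E1 unfolding fin_eq[OF BL] fin_eq[OF WaL] by (simp add: of_nat_ennreal)
    then show ?thesis by (subst (asm) ennreal_le_iff) auto
  qed
  have R2: "real (card X2) * mb \<le> real c * measure M Ob"
  proof -
    have "ennreal (real (card X2) * mb) \<le> ennreal (real c * measure M Ob)"
      using E2 mb unfolding fin_eq[OF ObL] emb by (simp add: of_nat_ennreal)
    then show ?thesis by (subst (asm) ennreal_le_iff) auto
  qed
  have mBn: "measure M B \<ge> 0" and man: "measure M Wa \<ge> 0" and mOn: "measure M Ob \<ge> 0" by auto
  have c0: "real c \<ge> 1" using c(1) by simp
  have "real c * measure M B * mb \<le> real (card X2) * measure M Wa * mb"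
    using R1 mb by (intro mult_right_mono) auto
  also have "\<dots> = (real (card X2) * mb) * measure M Wa" by (simp add: algebra_simps)
  also have "\<dots> \<le> (real c * measure M Ob) * measure M Wa"
    using R2 man by (intro mult_right_mono) auto
  also have "\<dots> \<le> (real c * measure M Ob) * ((1 + e) * mb)"
    using ma c0 mOn by (intro mult_left_mono) auto
  finally have "(real c * mb) * measure M B \<le> (real c * mb) * (measure M Ob * (1 + e))"
    by (simp add: algebra_simps)
  then have "measure M B \<le> measure M Ob * (1 + e)"
    using c0 mb by (subst (asm) mult_le_cancel_left_pos) auto
  also have "\<dots> \<le> (measure M K + e) * (1 + e)"
    using mO e by (intro mult_right_mono) auto
  finally show ?thesis unfolding B_def by (simp add: algebra_simps)
qed

lemma borel_pre:
  fixes f :: "'a::topological_space \<Rightarrow> 'b::topological_space"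
  assumes "continuous_on UNIV f" "A \<in> sets borel"
  shows "{x. f x \<in> A} \<in> sets borel"
  using measurable_sets_borel[OF borel_measurable_continuous_onI[OF assms(1)] assms(2)]
  by (simp add: vimage_def)

lemma neg_img: "uminus ` A = {x. -x \<in> (A::'a::group_add set)}"
proof safe
  fix x assume "-x \<in> A" then show "x \<in> uminus ` A" by (rule rev_image_eqI) simp
qed simp

lemma borel_rtrans: "A \<in> sets borel \<Longrightarrow> (\<lambda>x. x + g) ` A \<in> sets (borel::'a::topological_group_add measure)"
  unfolding rtrans_img by (rule borel_pre) (auto intro!: continuous_intros)

lemma borel_trans: "A \<in> sets borel \<Longrightarrow> (\<lambda>x. g + x) ` A \<in> sets (borel::'a::topological_group_add measure)"
  unfolding trans_img by (rule borel_pre) (auto intro!: continuous_intros)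

lemma borel_neg: "A \<in> sets borel \<Longrightarrow> uminus ` A \<in> sets (borel::'a::topological_group_add measure)"
  unfolding neg_img by (rule borel_pre) (auto intro!: continuous_intros)

lemma rtrans_back: "(\<lambda>x. x + g) ` ((\<lambda>x. x + -g) ` A) = (A::'a::group_add set)"
  by (simp add: image_image add.assoc)

lemma right_le_compact:
  fixes M :: "'a::{topological_group_add,t2_space} measure"
  assumes lc: "locally_compact_space (euclidean::'a topology)"
    and ap: "approximable_by_finite_quasigroups TYPE('a)"
    and lh: "left_haar_measure M" and K: "compact K"
  shows "emeasure M ((\<lambda>x. x + g) ` K) \<le> emeasure M K"
proof -
  note hf = haar_facts[OF lh]
  have r: "measure M ((\<lambda>x. x + g) ` K) \<le> measure M K"
    by (rule real_lim[OF main_eps[OF lc ap lh K]]) auto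
  have f1: "emeasure M ((\<lambda>x. x + g) ` K) < \<infinity>" using hf(2) compact_rtrans[OF K] by simp
  have f2: "emeasure M K < \<infinity>" using hf(2) K by simp
  show ?thesis unfolding fin_eq[OF f1] fin_eq[OF f2] using r by (rule ennreal_leI)
qed

lemma right_le_open:
  fixes M :: "'a::{topological_group_add,t2_space} measure"
  assumes lc: "locally_compact_space (euclidean::'a topology)"
    and ap: "approximable_by_finite_quasigroups TYPE('a)"
    and lh: "left_haar_measure M" and O: "open Ob"
  shows "emeasure M ((\<lambda>x. x + g) ` Ob) \<le> emeasure M Ob"
proof -
  note hf = haar_facts[OF lh]
  have "emeasure M ((\<lambda>x. x + g) ` Ob) = (SUP K\<in>{K. compact K \<and> K \<subseteq> (\<lambda>x. x + g) ` Ob}. emeasure M K)"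
    using hf(4) open_rtrans[OF O] by blast
  also have "\<dots> \<le> emeasure M Ob"
  proof (rule SUP_least)
    fix K assume K: "K \<in> {K. compact K \<and> K \<subseteq> (\<lambda>x. x + g) ` Ob}"
    define K' where "K' = (\<lambda>x. x + -g) ` K"
    have K': "compact K'" "K' \<subseteq> Ob" using K compact_rtrans[of K "-g"]
      by (auto simp: K'_def add.assoc)
    have "emeasure M K = emeasure M ((\<lambda>x. x + g) ` K')" unfolding K'_def rtrans_back ..
    also have "\<dots> \<le> emeasure M K'" by (rule right_le_compact[OF lc ap lh K'(1)])
    also have "\<dots> \<le> emeasure M Ob" by (rule emeasure_mono[OF K'(2)]) (use hf(1) O in \<open>simp add: borel_open\<close>)
    finally show "emeasure M K \<le> emeasure M Ob" .
  qed
  finally show ?thesis .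
qed

lemma right_le_borel:
  fixes M :: "'a::{topological_group_add,t2_space} measure"
  assumes lc: "locally_compact_space (euclidean::'a topology)"
    and ap: "approximable_by_finite_quasigroups TYPE('a)"
    and lh: "left_haar_measure M" and A: "A \<in> sets borel"
  shows "emeasure M ((\<lambda>x. x + g) ` A) \<le> emeasure M A"
proof -
  note hf = haar_facts[OF lh]
  have "emeasure M ((\<lambda>x. x + g) ` A) = (INF U\<in>{U. open U \<and> (\<lambda>x. x + g) ` A \<subseteq> U}. emeasure M U)"
    using hf(3) borel_rtrans[OF A] by blast
  also have "\<dots> \<le> (INF U\<in>{U. open U \<and> A \<subseteq> U}. emeasure M U)"
  proof (rule INF_greatest)
    fix U assume U: "U \<in> {U. open U \<and> A \<subseteq> U}"
    have "(INF U\<in>{U. open U \<and> (\<lambda>x. x + g) ` A \<subseteq> U}. emeasure M U) \<le> emeasure M ((\<lambda>x. x + g) ` U)"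
      by (rule INF_lower) (use U open_rtrans in auto)
    also have "\<dots> \<le> emeasure M U" using U by (intro right_le_open[OF lc ap lh]) auto
    finally show "(INF U\<in>{U. open U \<and> (\<lambda>x. x + g) ` A \<subseteq> U}. emeasure M U) \<le> emeasure M U" .
  qed
  also have "\<dots> = emeasure M A" using hf(3)[OF A] by simp
  finally show ?thesis .
qed

lemma right_inv:
  fixes M :: "'a::{topological_group_add,t2_space} measure"
  assumes lc: "locally_compact_space (euclidean::'a topology)"
    and ap: "approximable_by_finite_quasigroups TYPE('a)"
    and lh: "left_haar_measure M" and A: "A \<in> sets borel"
  shows "emeasure M ((\<lambda>x. x + g) ` A) = emeasure M A"
proof (rule antisym)
  show "emeasure M ((\<lambda>x. x + g) ` A) \<le> emeasure M A" by (rule right_le_borel[OF lc ap lh A])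
  have "emeasure M A = emeasure M ((\<lambda>x. x + -g) ` ((\<lambda>x. x + g) ` A))"
    by (simp add: image_image add.assoc)
  also have "\<dots> \<le> emeasure M ((\<lambda>x. x + g) ` A)"
    by (rule right_le_borel[OF lc ap lh borel_rtrans[OF A]])
  finally show "emeasure M A \<le> emeasure M ((\<lambda>x. x + g) ` A)" .
qed

lemma left_imp_right:
  fixes M :: "'a::{topological_group_add,t2_space} measure"
  assumes lc: "locally_compact_space (euclidean::'a topology)"
    and ap: "approximable_by_finite_quasigroups TYPE('a)"
    and lh: "left_haar_measure M"
  shows "right_haar_measure M"
  using lh right_inv[OF lc ap lh] unfolding left_haar_measure_def right_haar_measure_def by blast

lemma open_neg: "open U \<Longrightarrow> open (uminus ` (U::'a::topological_group_add set))"
  unfolding neg_img by (rule open_pre) (auto intro!: continuous_intros)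

lemma negneg: "uminus ` uminus ` (U::'a::group_add set) = U"
  by (simp add: image_image)

lemma neg_sets_open:
  "{U. open U \<and> uminus ` A \<subseteq> U} = (\<lambda>U. uminus ` U) ` {U. open U \<and> (A::'a::topological_group_add set) \<subseteq> U}"
proof safe
  fix U assume U: "open U" "uminus ` A \<subseteq> U"
  show "U \<in> (\<lambda>U. uminus ` U) ` {U. open U \<and> A \<subseteq> U}"
  proof (rule rev_image_eqI[of "uminus ` U"])
    show "uminus ` U \<in> {U. open U \<and> A \<subseteq> U}"
    proof safe
      show "open (uminus ` U)" using U(1) by (rule open_neg)
      fix a assume "a \<in> A" then have "-a \<in> U" using U(2) by auto
      then show "a \<in> uminus ` U" by (rule rev_image_eqI) simp
    qed
  qed (simp add: negneg)
qed (auto intro: open_neg)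

lemma neg_sets_compact:
  "{K. compact K \<and> K \<subseteq> uminus ` U} = (\<lambda>K. uminus ` K) ` {K. compact K \<and> K \<subseteq> (U::'a::topological_group_add set)}"
proof safe
  fix K assume K: "compact K" "K \<subseteq> uminus ` U"
  show "K \<in> (\<lambda>K. uminus ` K) ` {K. compact K \<and> K \<subseteq> U}"
  proof (rule rev_image_eqI[of "uminus ` K"])
    show "uminus ` K \<in> {K. compact K \<and> K \<subseteq> U}"
      using K compact_neg[OF K(1)] by auto
  qed (simp add: negneg)
qed (auto intro: compact_neg)

lemma reflect:
  fixes N :: "'a::{topological_group_add,t2_space} measure"
  assumes rh: "right_haar_measure N"
  shows "left_haar_measure (distr N borel uminus)"
    and "\<And>A. A \<in> sets borel \<Longrightarrow> emeasure (distr N borel uminus) A = emeasure N (uminus ` A)"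
proof -
  define N' where "N' = distr N borel (uminus::'a \<Rightarrow> 'a)"
  have rf: "sets N = sets borel" "\<And>K. compact K \<Longrightarrow> emeasure N K < \<infinity>"
    "\<And>A. A \<in> sets borel \<Longrightarrow> emeasure N A = (INF U\<in>{U. open U \<and> A \<subseteq> U}. emeasure N U)"
    "\<And>U. open U \<Longrightarrow> emeasure N U = (SUP K\<in>{K. compact K \<and> K \<subseteq> U}. emeasure N K)"
    "emeasure N UNIV \<noteq> 0"
    "\<And>g A. A \<in> sets borel \<Longrightarrow> emeasure N ((\<lambda>x. x + g) ` A) = emeasure N A"
    using rh unfolding right_haar_measure_def radon_measure_def by auto
  have meas: "(uminus::'a \<Rightarrow> 'a) \<in> measurable N borel"
    unfolding measurable_cong_sets[OF rf(1) refl]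
    by (rule borel_measurable_continuous_onI) (auto intro!: continuous_intros)
  have sp: "space N = UNIV" using sets_eq_imp_space_eq[OF rf(1)] by simp
  have em: "emeasure N' A = emeasure N (uminus ` A)" if "A \<in> sets borel" for A
  proof -
    have "emeasure N' A = emeasure N (uminus -` A \<inter> space N)"
      unfolding N'_def using meas that by (rule emeasure_distr)
    also have "uminus -` A \<inter> space N = uminus ` A" unfolding sp neg_img by auto
    finally show ?thesis .
  qed
  then show "\<And>A. A \<in> sets borel \<Longrightarrow> emeasure (distr N borel uminus) A = emeasure N (uminus ` A)"
    unfolding N'_def by simp
  have sN': "sets N' = sets borel" unfolding N'_def by simp
  have "radon_measure N'"
    unfolding radon_measure_def
  proof (intro conjI allI impI ballI)
    show "sets N' = sets borel" by (rule sN')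
    fix K :: "'a set" assume K: "compact K"
    show "emeasure N' K < \<infinity>" using em[OF compact_borel[OF K]] rf(2)[OF compact_neg[OF K]] by simp
  next
    fix A :: "'a set" assume A: "A \<in> sets borel"
    have "emeasure N' A = emeasure N (uminus ` A)" by (rule em[OF A])
    also have "\<dots> = (INF U\<in>{U. open U \<and> uminus ` A \<subseteq> U}. emeasure N U)" by (rule rf(3)[OF borel_neg[OF A]])
    also have "\<dots> = (INF U\<in>{U. open U \<and> A \<subseteq> U}. emeasure N (uminus ` U))"
      unfolding neg_sets_open by (simp add: image_image)
    also have "\<dots> = (INF U\<in>{U. open U \<and> A \<subseteq> U}. emeasure N' U)"
      by (rule INF_cong) (auto simp: em borel_open)
    finally show "emeasure N' A = (INF U\<in>{U. open U \<and> A \<subseteq> U}. emeasure N' U)" .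
  next
    fix U :: "'a set" assume U: "open U"
    have "emeasure N' U = emeasure N (uminus ` U)" by (rule em[OF borel_open[OF U]])
    also have "\<dots> = (SUP K\<in>{K. compact K \<and> K \<subseteq> uminus ` U}. emeasure N K)" by (rule rf(4)[OF open_neg[OF U]])
    also have "\<dots> = (SUP K\<in>{K. compact K \<and> K \<subseteq> U}. emeasure N (uminus ` K))"
      unfolding neg_sets_compact by (simp add: image_image)
    also have "\<dots> = (SUP K\<in>{K. compact K \<and> K \<subseteq> U}. emeasure N' K)"
      by (rule SUP_cong) (auto simp: em compact_borel)
    finally show "emeasure N' U = (SUP K\<in>{K. compact K \<and> K \<subseteq> U}. emeasure N' K)" .
  qed
  moreover have "emeasure N' UNIV \<noteq> 0"
  proof -
    have "uminus ` (UNIV::'a set) = UNIV" unfolding neg_img by simp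
    then show ?thesis using em[of UNIV] rf(5) by simp
  qed
  moreover have "emeasure N' ((\<lambda>x. g + x) ` A) = emeasure N' A" if A: "A \<in> sets borel" for g A
  proof -
    have "emeasure N' ((\<lambda>x. g + x) ` A) = emeasure N (uminus ` ((\<lambda>x. g + x) ` A))"
      by (rule em[OF borel_trans[OF A]])
    also have "uminus ` ((\<lambda>x. g + x) ` A) = (\<lambda>x. x + -g) ` (uminus ` A)"
      by (simp add: image_image minus_add)
    also have "emeasure N \<dots> = emeasure N (uminus ` A)" by (rule rf(6)[OF borel_neg[OF A]])
    also have "\<dots> = emeasure N' A" by (rule em[OF A, symmetric])
    finally show ?thesis .
  qed
  ultimately show "left_haar_measure (distr N borel uminus)"
    unfolding left_haar_measure_def N'_def by blast
qed

theorem corollary1: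
  assumes "locally_compact_group TYPE('a::{topological_group_add,t2_space})"
    and "approximable_by_finite_quasigroups TYPE('a)"
  shows "unimodular TYPE('a)"
proof -
  have lc: "locally_compact_space (euclidean::'a topology)"
    using assms(1) unfolding locally_compact_group_def .
  note ap = assms(2)
  show ?thesis unfolding unimodular_def
  proof (intro allI iffI)
    fix M :: "'a measure"
    assume "left_haar_measure M" then show "right_haar_measure M" by (rule left_imp_right[OF lc ap])
  next
    fix M :: "'a measure"
    assume rh: "right_haar_measure M"
    define N' where "N' = distr M borel (uminus::'a \<Rightarrow> 'a)"
    have lN: "left_haar_measure N'" unfolding N'_def by (rule reflect(1)[OF rh])
    have em: "\<And>A. A \<in> sets borel \<Longrightarrow> emeasure N' A = emeasure M (uminus ` A)"
      unfolding N'_def by (rule reflect(2)[OF rh])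
    have rN: "right_haar_measure N'" by (rule left_imp_right[OF lc ap lN])
    have inv: "emeasure N' ((\<lambda>x. x + g) ` A) = emeasure N' A" if "A \<in> sets borel" for g A
      using rN that unfolding right_haar_measure_def by blast
    have "emeasure M ((\<lambda>x. g + x) ` A) = emeasure M A" if A: "A \<in> sets borel" for g A
    proof -
      have seq: "(\<lambda>x. g + x) ` A = uminus ` ((\<lambda>x. x + -g) ` (uminus ` A))"
        by (simp add: image_image minus_add)
      have e1: "emeasure N' ((\<lambda>x. x + -g) ` (uminus ` A)) = emeasure M (uminus ` ((\<lambda>x. x + -g) ` (uminus ` A)))"
        by (rule em[OF borel_rtrans[OF borel_neg[OF A]]])
      have "emeasure M ((\<lambda>x. g + x) ` A) = emeasure N' ((\<lambda>x. x + -g) ` (uminus ` A))"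
        unfolding seq by (rule e1[symmetric])
      also have "\<dots> = emeasure N' (uminus ` A)" by (rule inv[OF borel_neg[OF A]])
      also have "\<dots> = emeasure M (uminus ` uminus ` A)" by (rule em[OF borel_neg[OF A]])
      also have "\<dots> = emeasure M A" by (simp add: negneg)
      finally show ?thesis .
    qed
    then show "left_haar_measure M" using rh unfolding left_haar_measure_def right_haar_measure_def by blast
  qed
qed

end
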